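(* Let $r\ne0$ be an integer, $K$ a field of characteristic not dividing $2r$, and $E_r$ the elliptic curve $y^2=x^3-r^{-1}x$ over $K$, embedded in $\mathbb{P}^2$ as $x^3-rxz^2-ry^2z=0$ (the affine point $(x,y)$ corresponding to $(x:y:r^{-1})$, and $O=(0:1:0)$). Let $Q=(a,b)$ be an affine point of $E_r$ such that the translation $\tau_Q:P\mapsto P+Q$ of $E_r$ is the restriction to $E_r$ of some $\bar\varphi\in\mathrm{PGL}_3(K)$ with $\bar\varphi(E_r)\subseteq E_r$. Then $3r^2a^4-6ra^2-1=0$. *)

theory Defs
  imports "HOL-Analysis.Analysis" "HOL-Algebra.Algebraic_Closure_Type"
begin

datatype 'a ecpt = Inf | Aff 'a 'a

text \<open>The Weierstrass coefficient A = - r^(-1) of E_r : y^2 = x^3 + A x.\<close>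
definition coefA :: "int \<Rightarrow> 'a::field" where
  "coefA r = - inverse (of_int r)"

definition on_Er :: "int \<Rightarrow> 'a::field ecpt \<Rightarrow> bool" where
  "on_Er r P = (case P of Inf \<Rightarrow> True
     | Aff x y \<Rightarrow> y ^ 2 = x ^ 3 - inverse (of_int r) * x)"

fun ec_add :: "int \<Rightarrow> 'a::field ecpt \<Rightarrow> 'a ecpt \<Rightarrow> 'a ecpt" where
  "ec_add r Inf P = P"
| "ec_add r (Aff x1 y1) Inf = Aff x1 y1"
| "ec_add r (Aff x1 y1) (Aff x2 y2) =
     (if x1 = x2 then
        (if y1 = - y2 then Inf
         else (let l = (3 * x1 ^ 2 + coefA r) / (2 * y1);
                   x3 = l ^ 2 - 2 * x1
               in Aff x3 (l * (x1 - x3) - y1)))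
      else (let l = (y2 - y1) / (x2 - x1);
                x3 = l ^ 2 - x1 - x2
            in Aff x3 (l * (x1 - x3) - y1)))"

text \<open>Embedding of E_r into P^2 as X^3 - r X Z^2 - r Y^2 Z = 0:
  (x, y) goes to (x : y : r^(-1)), and O goes to (0 : 1 : 0).
  Projective points are represented by nonzero vectors in K^3.\<close>
definition proj_pt :: "int \<Rightarrow> 'a::field ecpt \<Rightarrow> 'a^3" where
  "proj_pt r P = (case P of Inf \<Rightarrow> vector [0, 1, 0]
     | Aff x y \<Rightarrow> vector [x, y, inverse (of_int r)])"

definition cubic_Er :: "int \<Rightarrow> 'a::field^3 \<Rightarrow> bool" where
  "cubic_Er r v = (v $ 1 ^ 3 - of_int r * v $ 1 * v $ 3 ^ 2 - of_int r * v $ 2 ^ 2 * v $ 3 = 0)"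

definition proj_Er :: "int \<Rightarrow> ('a::field^3) set" where
  "proj_Er r = {v. v \<noteq> 0 \<and> cubic_Er r v}"

definition proj_eq :: "'a::field^3 \<Rightarrow> 'a^3 \<Rightarrow> bool" where
  "proj_eq u v = (u \<noteq> 0 \<and> v \<noteq> 0 \<and> (\<exists>c. c \<noteq> 0 \<and> v = c *s u))"

definition mat_ac :: "'a::field^3^3 \<Rightarrow> 'a alg_closure^3^3" where
  "mat_ac M = (\<chi> i j. to_ac (M $ i $ j))"

end

theory Submission
  imports Defs
begin

lemma mv3: "((N :: 'a::field^3^3) *v vector [x,y,z]) $ i = N$i$1*x + N$i$2*y + N$i$3*z"
  by (simp add: matrix_vector_mult_def sum_3)

lemma neg_self: "(2::'a::field) \<noteq> 0 \<Longrightarrow> x \<noteq> 0 \<Longrightarrow> (x::'a) \<noteq> - x"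
proof
  assume "(2::'a) \<noteq> 0" "x \<noteq> 0" "x = - x"
  then have "2 * x = 0" by (metis mult_2 add.right_inverse)
  with \<open>(2::'a) \<noteq> 0\<close> \<open>x \<noteq> 0\<close> show False by simp
qed

lemma proj_eq_comp: "proj_eq u v \<Longrightarrow> \<exists>c. c \<noteq> 0 \<and> (\<forall>i. v $ i = c * u $ i)"
  unfolding proj_eq_def by auto

theorem lemma3p6:
  fixes r :: int and a b :: "'k::field" and M :: "'k^3^3"
  assumes "r \<noteq> 0"
    and "\<not> int CHAR('k) dvd 2 * r"
    and Q: "on_Er r (Aff a b)"
    and M_inv: "invertible M"
    and M_pres: "\<forall>v \<in> proj_Er r. mat_ac M *v v \<in> proj_Er r"
    and M_transl: "\<forall>P. on_Er r P \<longrightarrow>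
        proj_eq (mat_ac M *v proj_pt r P) (proj_pt r (ec_add r P (Aff (to_ac a) (to_ac b))))"
  shows "3 * of_int r ^ 2 * a ^ 4 - 6 * of_int r * a ^ 2 - 1 = 0"
proof -
  define N where "N = mat_ac M"
  define A where "A = to_ac a"
  define B where "B = to_ac b"
  define s where "s = inverse (of_int r :: 'k alg_closure)"
  have r2: "(of_int (2 * r) :: 'k) \<noteq> 0"
    using assms(2) of_int_eq_0_iff_char_dvd by blast
  have r0: "(of_int r :: 'k) \<noteq> 0" and two: "(2::'k) \<noteq> 0"
    using r2 by auto
  have rC: "(of_int r :: 'k alg_closure) \<noteq> 0"
    by (metis to_ac_of_int to_ac_eq_0_iff r0)
  have twoC: "(2::'k alg_closure) \<noteq> 0"
    by (metis to_ac_numeral to_ac_eq_0_iff two)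
  have s0: "s \<noteq> 0" and sr: "s * of_int r = 1" using rC by (auto simp: s_def)
  have "b^2 = a^3 - inverse (of_int r) * a" using Q by (simp add: on_Er_def)
  then have "to_ac (b^2) = to_ac (a^3 - inverse (of_int r) * a)" by simp
  then have curve: "B^2 = A^3 - s*A" by (simp add: A_def B_def s_def)
  have T: "\<And>P. on_Er r P \<Longrightarrow> \<exists>c. c\<noteq>0 \<and> (\<forall>i. proj_pt r (ec_add r P (Aff A B)) $ i = c * (N *v proj_pt r P) $ i)"
    using M_transl proj_eq_comp unfolding N_def A_def B_def by blast
  have key: "3 * of_int r ^ 2 * A ^ 4 - 6 * of_int r * A ^ 2 - 1 = 0"
  proof (cases "B = 0")
    case False
    have onI: "on_Er r (Inf :: 'k alg_closure ecpt)" by (simp add: on_Er_def)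
    have onQ: "on_Er r (Aff A B)" using curve by (simp add: on_Er_def s_def)
    have onmQ: "on_Er r (Aff A (-B))" using curve by (simp add: on_Er_def s_def)
    have BB: "B \<noteq> - B" using False twoC neg_self by blast
    define lam where "lam = (3 * A ^ 2 + coefA r) / (2 * B)"
    define X3 where "X3 = lam ^ 2 - 2 * A"
    have add2: "ec_add r (Aff A B) (Aff A B) = Aff X3 (lam * (A - X3) - B)"
      using BB by (simp add: Let_def lam_def X3_def)
    obtain c0 where c0: "c0 \<noteq> 0" "\<forall>i. proj_pt r (Aff A B) $ i = c0 * (N *v proj_pt r Inf) $ i"
      using T[OF onI] by auto
    obtain c1 where c1: "c1 \<noteq> 0" "\<forall>i. proj_pt r (Aff X3 (lam * (A - X3) - B)) $ i = c1 * (N *v proj_pt r (Aff A B)) $ i"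
      using T[OF onQ] add2 by auto
    obtain c2 where c2: "c2 \<noteq> 0" "\<forall>i. proj_pt r (Inf :: 'k alg_closure ecpt) $ i = c2 * (N *v proj_pt r (Aff A (-B))) $ i"
      using T[OF onmQ] by auto
    have e1: "A = c0 * N$1$2" "s = c0 * N$3$2"
      using c0(2)[rule_format, of 1] c0(2)[rule_format, of 3]
      by (simp_all add: proj_pt_def mv3 s_def)
    have e2: "X3 = c1 * (N$1$1*A + N$1$2*B + N$1$3* s)" "s = c1 * (N$3$1*A + N$3$2*B + N$3$3* s)"
      using c1(2)[rule_format, of 1] c1(2)[rule_format, of 3]
      by (simp_all add: proj_pt_def mv3 s_def)
    have e3: "0 = c2 * (N$1$1*A - N$1$2*B + N$1$3* s)" "0 = c2 * (N$3$1*A - N$3$2*B + N$3$3* s)"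
      using c2(2)[rule_format, of 1] c2(2)[rule_format, of 3]
      by (simp_all add: proj_pt_def mv3 s_def)
    have z1: "N$1$1*A - N$1$2*B + N$1$3* s = 0" using e3(1) c2(1) by (metis mult_eq_0_iff)
    have z3: "N$3$1*A - N$3$2*B + N$3$3* s = 0" using e3(2) c2(1) by (metis mult_eq_0_iff)
    have f1: "N$1$1*A + N$1$3* s = N$1$2*B" "N$3$1*A + N$3$3* s = N$3$2*B"
      using z1 z3 by (simp_all add: algebra_simps eq_neg_iff_add_eq_0)
    have "X3 = c1 * ((N$1$1*A + N$1$3* s) + N$1$2*B)" using e2(1) by (simp add: algebra_simps)
    then have "X3 = c1 * (N$1$2*B + N$1$2*B)" by (simp only: f1(1))
    then have g1a: "X3 = c1 * 2 * B * N$1$2" by (simp add: algebra_simps)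
    have "s = c1 * ((N$3$1*A + N$3$3* s) + N$3$2*B)" using e2(2) by (simp add: algebra_simps)
    then have "s = c1 * (N$3$2*B + N$3$2*B)" by (simp only: f1(2))
    then have g1b: "s = c1 * 2 * B * N$3$2" by (simp add: algebra_simps)
    note g1 = g1a g1b
    have h: "c1 * 2 * B = c0"
    proof -
      have "s * c0 = (c1 * 2 * B) * (c0 * N$3$2)" using g1(2) by (simp add: algebra_simps)
      also have "\<dots> = (c1 * 2 * B) * s" using e1(2) by simp
      finally show ?thesis using s0 by (simp add: algebra_simps)
    qed
    have X3A: "X3 = A" using g1(1) e1(1) h by (simp add: algebra_simps)
    then have "lam^2 = 3 * A" by (simp add: X3_def)
    then have "(3 * A ^ 2 - s)^2 = 3 * A * (2*B)^2"
    proof -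
      have cA: "coefA r = - s" by (simp add: coefA_def s_def)
      have nz: "(2*B)^2 \<noteq> 0" using False twoC power_not_zero mult_eq_0_iff by metis
      have "lam^2 = (3 * A ^ 2 - s)^2 / (2*B)^2" by (simp add: lam_def cA power_divide)
      then have "(3 * A ^ 2 - s)^2 = lam^2 * (2*B)^2" using nz by simp
      then show ?thesis using \<open>lam^2 = 3 * A\<close> by simp
    qed
    then have "(3 * A ^ 2 - s)^2 = 12 * A * (A^3 - s*A)"
      using curve by (simp add: power_mult_distrib)
    moreover have "3 * A^4 - 6 * s * A^2 - s^2 = 12 * A * (A^3 - s*A) - (3 * A ^ 2 - s)^2"
      by (simp add: eval_nat_numeral algebra_simps)
    ultimately have k0: "3 * A^4 - 6 * s * A^2 - s^2 = 0" by simp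
    have "of_int r ^ 2 * (3 * A^4 - 6 * s * A^2 - s^2)
        = 3 * of_int r ^ 2 * A ^ 4 - 6 * of_int r * A ^ 2 * (s * of_int r) - (s * of_int r)^2"
      by (simp add: eval_nat_numeral algebra_simps)
    then show ?thesis using sr k0 by simp
  next
    case True
    have sA: "A^3 = s * A" using curve True by simp
    obtain e2 e3 where e: "e2 \<noteq> e3" "A \<noteq> e2" "A \<noteq> e3" "e2^3 = s*e2" "e3^3 = s*e3"
      "A + e2 + e3 = 0"
    proof (cases "A = 0")
      case True
      obtain t where t: "t^2 = s" using nth_root_exists[of 2 s] by auto
      have t0: "t \<noteq> 0" using t s0 by auto
      have "t \<noteq> - t" using t0 twoC neg_self by blast
      then show ?thesis using that[of t "-t"] True t t0
        by (auto simp: power3_eq_cube power2_eq_square)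
    next
      case False
      have As: "A^2 = s" using sA False by (simp add: power3_eq_cube power2_eq_square)
      have "A \<noteq> - A" using False twoC neg_self by blast
      then show ?thesis using that[of "-A" 0] False As
        by (auto simp: power3_eq_cube power2_eq_square)
    qed
    have onQ: "on_Er r (Aff A 0)" using sA by (simp add: on_Er_def s_def)
    have on2: "on_Er r (Aff e2 0)" using e by (simp add: on_Er_def s_def)
    have on3: "on_Er r (Aff e3 0)" using e by (simp add: on_Er_def s_def)
    have ad1: "ec_add r (Aff A 0) (Aff A 0) = Inf" by simp
    have ad2: "\<exists>x. ec_add r (Aff e2 0) (Aff A 0) = Aff x 0" using e by (simp add: Let_def)
    have ad3: "\<exists>x. ec_add r (Aff e3 0) (Aff A 0) = Aff x 0" using e by (simp add: Let_def)
    obtain c1 where c1: "c1 \<noteq> 0" "\<forall>i. proj_pt r (Inf :: 'k alg_closure ecpt) $ i = c1 * (N *v proj_pt r (Aff A 0)) $ i"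
      using T[OF onQ] True ad1 by auto
    obtain c2 x2 where c2: "c2 \<noteq> 0" "\<forall>i. proj_pt r (Aff x2 0) $ i = c2 * (N *v proj_pt r (Aff e2 0)) $ i"
      using T[OF on2] True ad2 by auto
    obtain c3 x3 where c3: "c3 \<noteq> 0" "\<forall>i. proj_pt r (Aff x3 0) $ i = c3 * (N *v proj_pt r (Aff e3 0)) $ i"
      using T[OF on3] True ad3 by auto
    have q1: "1 = c1 * (N$2$1*A + N$2$3* s)"
      using c1(2)[rule_format, of 2] by (simp add: proj_pt_def mv3 s_def)
    have q2: "N$2$1*e2 + N$2$3* s = 0"
      using c2(2)[rule_format, of 2] c2(1) by (simp add: proj_pt_def mv3 s_def)
    have q3: "N$2$1*e3 + N$2$3* s = 0"
      using c3(2)[rule_format, of 2] c3(1) by (simp add: proj_pt_def mv3 s_def)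
    have "N$2$1 * (e2 - e3) = (N$2$1*e2 + N$2$3* s) - (N$2$1*e3 + N$2$3* s)"
      by (simp add: algebra_simps)
    then have "N$2$1 * (e2 - e3) = 0" using q2 q3 by simp
    then have n1: "N$2$1 = 0" using e(1) by simp
    then have "N$2$3 = 0" using q2 s0 by simp
    then show ?thesis using q1 n1 by simp
  qed
  have "to_ac (3 * of_int r ^ 2 * a ^ 4 - 6 * of_int r * a ^ 2 - 1)
      = 3 * of_int r ^ 2 * A ^ 4 - 6 * of_int r * A ^ 2 - 1"
    by (simp add: A_def)
  then have "to_ac (3 * of_int r ^ 2 * a ^ 4 - 6 * of_int r * a ^ 2 - 1) = 0"
    using key by simp
  then show ?thesis using to_ac_eq_0_iff by blast
qed

end
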